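(* Let $A_1,\ldots,A_n$ be events in a probability space, let $X$ be the number of these events that occur, and let $S_{k+1}=\sum_{1\le i_1<\cdots<i_{k+1}\le n}P(A_{i_1}\cdots A_{i_{k+1}})$. For integers $i,k$ with $1\le i\le k$ and $k+1\le n$, $$E\left[\binom{X-i}{k+1-i}\right]\ge\frac{\binom{k+1}{i}}{\binom{n}{i}}S_{k+1}.$$
   Context: Binomial convention: for integers $s,t$, $\binom{t}{s}=0$ if $\min(s,t)<0$ or $s>t$; otherwise $\binom{t}{s}=\frac{t!}{s!(t-s)!}$. $A_{i_1}\cdots A_{i_j}$ denotes the intersection of the events. *)

theory Defs
  imports "HOL-Probability.Probability"
begin

definition binom :: "int \<Rightarrow> int \<Rightarrow> int" where
  "binom t s = (if min s t < 0 \<or> s > t then 0 else int (nat t choose nat s))"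

end

theory Submission
  imports Defs
begin

lemma arith_part:
  fixes x n i k :: nat
  assumes "x \<le> n" "1 \<le> i" "i \<le> k" "k + 1 \<le> n"
  shows "real ((k + 1) choose i) / real (n choose i) * real (x choose (k+1))
     \<le> real_of_int (binom (int x - int i) (int (k + 1) - int i))"
proof (cases "x < k + 1")
  case True
  then have "x choose (k+1) = 0" by simp
  moreover have "binom (int x - int i) (int (k + 1) - int i) \<ge> 0"
    unfolding binom_def by auto
  ultimately show ?thesis by (metis mult_zero_right of_nat_0 of_int_0_le_iff)
next
  case False
  have b: "binom (int x - int i) (int (k + 1) - int i) = int ((x - i) choose (k + 1 - i))"
  proof -
    have e1: "nat (int (k+1) - int i) = k+1-i" using assms by linarith
    have e2: "nat (int x - int i) = x-i" using assms False by linarith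
    show ?thesis unfolding binom_def e1 e2 using False assms by auto
  qed
  have m: "(x choose (k+1)) * ((k+1) choose i) = (x choose i) * ((x - i) choose (k + 1 - i))"
    using choose_mult[of i "k+1" x] False assms by simp
  have pos: "real (n choose i) > 0" using assms by simp
  have le: "real (x choose i) \<le> real (n choose i)"
    using binomial_right_mono[OF assms(1)] by simp
  have "real ((k + 1) choose i) / real (n choose i) * real (x choose (k+1))
      = real (x choose i) * real ((x - i) choose (k + 1 - i)) / real (n choose i)"
    using m by (simp add: field_simps flip: of_nat_mult)
  also have "\<dots> \<le> real (n choose i) * real ((x - i) choose (k + 1 - i)) / real (n choose i)"
    using le pos by (intro divide_right_mono mult_right_mono) auto
  also have "\<dots> = real ((x - i) choose (k + 1 - i))" using pos by simp
  finally show ?thesis using b by simp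
qed

lemma count_part:
  fixes A :: "nat \<Rightarrow> 'a set" and n k :: nat
  shows "(\<Sum>I \<in> {I. I \<subseteq> {1..n} \<and> card I = k + 1}. indicator (\<Inter>j\<in>I. A j) \<omega> :: real)
     = real (card {j \<in> {1..n}. \<omega> \<in> A j} choose (k+1))"
proof -
  let ?F = "{I. I \<subseteq> {1..n} \<and> card I = k + 1}"
  let ?T = "{j \<in> {1..n}. \<omega> \<in> A j}"
  have fin: "finite ?F" by (rule finite_subset[of _ "Pow {1..n}"]) auto
  have "(\<Sum>I \<in> ?F. indicator (\<Inter>j\<in>I. A j) \<omega> :: real) = real (card {I \<in> ?F. \<omega> \<in> (\<Inter>j\<in>I. A j)})"
    using fin apply (simp add: indicator_def sum.If_cases)
    by (rule arg_cong[where f=card]) auto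
  also have "{I \<in> ?F. \<omega> \<in> (\<Inter>j\<in>I. A j)} = {I. I \<subseteq> ?T \<and> card I = k + 1}" by blast
  also have "card \<dots> = card ?T choose (k+1)" by (rule n_subsets) auto
  finally show ?thesis .
qed

theorem lemma3:
  fixes M :: "'a measure" and A :: "nat \<Rightarrow> 'a set" and n i k :: nat
  assumes "prob_space M"
    and "\<And>j. j \<in> {1..n} \<Longrightarrow> A j \<in> sets M"
    and "1 \<le> i" and "i \<le> k" and "k + 1 \<le> n"
  defines "X \<equiv> (\<lambda>\<omega>. card {j \<in> {1..n}. \<omega> \<in> A j})"
    and "S \<equiv> (\<Sum>I \<in> {I. I \<subseteq> {1..n} \<and> card I = k + 1}. measure M (\<Inter>j\<in>I. A j))"
  shows "(\<integral>\<omega>. real_of_int (binom (int (X \<omega>) - int i) (int (k + 1) - int i)) \<partial>M)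
           \<ge> real ((k + 1) choose i) / real (n choose i) * S"
proof -
  interpret prob_space M by fact
  let ?F = "{I. I \<subseteq> {1..n} \<and> card I = k + 1}"
  define c where "c = real ((k + 1) choose i) / real (n choose i)"
  define f where "f = (\<lambda>\<omega>. real_of_int (binom (int (X \<omega>) - int i) (int (k + 1) - int i)))"
  define g where "g = (\<lambda>\<omega>. c * (\<Sum>I \<in> ?F. indicator (\<Inter>j\<in>I. A j) \<omega> :: real))"
  have fin: "finite ?F" by (rule finite_subset[of _ "Pow {1..n}"]) auto
  have setsI: "(\<Inter>j\<in>I. A j) \<in> sets M" if "I \<in> ?F" for I
  proof -
    from that have "finite I" "I \<noteq> {}" by (auto intro: finite_subset)
    then show ?thesis using that assms(2) by (intro sets.finite_INT) auto
  qed
  have intI: "integrable M (\<lambda>\<omega>. indicator (\<Inter>j\<in>I. A j) \<omega> :: real)" if "I \<in> ?F" for I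
    using setsI[OF that] by (intro integrable_real_indicator) (auto simp: emeasure_finite less_top[symmetric])
  have gint: "integrable M g" unfolding g_def using intI by (intro integrable_mult_right integrable_sum) auto
  have gval: "integral\<^sup>L M g = c * S"
    unfolding g_def S_def using intI setsI
    by (simp add: integral_sum)
  define Y where "Y = (\<lambda>\<omega>. \<Sum>j\<in>{1..n}. indicator (A j) \<omega> :: real)"
  have Ym: "Y \<in> borel_measurable M" unfolding Y_def using assms(2) by auto
  have XY: "X \<omega> = nat \<lfloor>Y \<omega>\<rfloor>" for \<omega>
  proof -
    have "Y \<omega> = real (card {j \<in> {1..n}. \<omega> \<in> A j})"
      unfolding Y_def apply (simp add: indicator_def sum.If_cases)
      by (rule arg_cong[where f=card]) auto
    then show ?thesis unfolding X_def by simp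
  qed
  have Yfin: "finite (Y ` space M)"
  proof (rule finite_subset)
    show "Y ` space M \<subseteq> real ` {0..n}"
    proof
      fix y assume "y \<in> Y ` space M"
      then obtain \<omega> where "y = Y \<omega>" by auto
      moreover have "Y \<omega> = real (card {j \<in> {1..n}. \<omega> \<in> A j})"
        unfolding Y_def apply (simp add: indicator_def sum.If_cases)
        by (rule arg_cong[where f=card]) auto
      moreover have "card {j \<in> {1..n}. \<omega> \<in> A j} \<le> n"
        using card_mono[of "{1..n}" "{j \<in> {1..n}. \<omega> \<in> A j}"] by (metis (no_types, lifting) card_atLeastAtMost diff_Suc_1 finite_atLeastAtMost mem_Collect_eq subsetI)
      ultimately show "y \<in> real ` {0..n}" by auto
    qed
  qed auto
  have sY: "simple_function M Y" by (rule simple_function_borel_measurable[OF Ym Yfin])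
  have "f = (\<lambda>y. real_of_int (binom (int (nat \<lfloor>y\<rfloor>) - int i) (int (k + 1) - int i))) \<circ> Y"
    unfolding f_def by (auto simp: XY)
  then have sf: "simple_function M f" using sY by simp
  have fm: "f \<in> borel_measurable M" by (rule borel_measurable_simple_function[OF sf])
  have Xle: "X \<omega> \<le> n" for \<omega>
    unfolding X_def using card_mono[of "{1..n}" "{j \<in> {1..n}. \<omega> \<in> A j}"] by (metis (no_types, lifting) card_atLeastAtMost diff_Suc_1 finite_atLeastAtMost mem_Collect_eq subsetI)
  have fbound: "norm (f \<omega>) \<le> 2 ^ n" for \<omega>
  proof -
    have "binom (int (X \<omega>) - int i) (int (k + 1) - int i) \<le> 2 ^ n"
    proof -
      have "nat (int (X \<omega>) - int i) choose nat (int (k + 1) - int i) \<le> 2 ^ nat (int (X \<omega>) - int i)"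
        by (rule binomial_le_pow2)
      also have "(2::nat) ^ nat (int (X \<omega>) - int i) \<le> 2 ^ n"
        using Xle[of \<omega>] by (intro power_increasing) auto
      finally have "int (nat (int (X \<omega>) - int i) choose nat (int (k + 1) - int i)) \<le> 2 ^ n"
        by (metis of_nat_le_iff of_nat_numeral of_nat_power)
      then show ?thesis unfolding binom_def by auto
    qed
    moreover have "binom (int (X \<omega>) - int i) (int (k + 1) - int i) \<ge> 0"
      unfolding binom_def by auto
    ultimately show ?thesis unfolding f_def
      by (metis abs_of_nonneg of_int_0_le_iff of_int_le_iff of_int_numeral of_int_power real_norm_def)
  qed
  have fint: "integrable M f"
    by (rule integrable_const_bound[where B="2^n"]) (use fbound fm in auto)
  have pw: "g \<omega> \<le> f \<omega>" for \<omega>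
    unfolding g_def f_def c_def count_part X_def
    using arith_part[OF _ assms(3-5)] Xle[of \<omega>] unfolding X_def by blast
  have "integral\<^sup>L M g \<le> integral\<^sup>L M f"
    by (rule integral_mono[OF gint fint]) (use pw in auto)
  then show ?thesis using gval unfolding f_def c_def by simp
qed

end
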